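(* Let $k\ge1$, let $F$ be a 2-factor on $4k$ vertices, and let $C$ be a red/blue-coloring of $K_{4k}$ such that the red edges form two disjoint cliques of size $2k$ each (all other edges being blue). Then $C$ contains a copy of $F$ with at least $4k-2$ red edges and a copy of $F$ with at least $8k/3$ blue edges.
   Context: A 2-factor on $N$ vertices is a 2-regular graph on $N$ vertices. A copy of $F$ is a subgraph isomorphic to $F$. *)

theory Defs
  imports Main
begin

definition simple_graph :: "'a set \<Rightarrow> ('a \<Rightarrow> 'a \<Rightarrow> bool) \<Rightarrow> bool" where
  "simple_graph W E \<longleftrightarrow> finite W \<and> (\<forall>u v. E u v \<longrightarrow> E v u) \<and> (\<forall>u. \<not> E u u)
     \<and> (\<forall>u v. E u v \<longrightarrow> u \<in> W \<and> v \<in> W)"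

definition two_factor :: "'a set \<Rightarrow> ('a \<Rightarrow> 'a \<Rightarrow> bool) \<Rightarrow> bool" where
  "two_factor W E \<longleftrightarrow> simple_graph W E \<and> (\<forall>v\<in>W. card {u\<in>W. E v u} = 2)"

definition edges :: "'a set \<Rightarrow> ('a \<Rightarrow> 'a \<Rightarrow> bool) \<Rightarrow> 'a set set" where
  "edges W E = {{u, v} | u v. u \<in> W \<and> v \<in> W \<and> E u v}"

text \<open>The colouring col of the complete graph assigns to each pair of
  distinct vertices a colour (True = red, False = blue).\<close>
definition colour_count :: "'a set \<Rightarrow> ('a \<Rightarrow> 'a \<Rightarrow> bool) \<Rightarrow> ('a \<Rightarrow> 'b)
    \<Rightarrow> ('b \<Rightarrow> 'b \<Rightarrow> bool) \<Rightarrow> bool \<Rightarrow> nat" where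
  "colour_count W E phi col c =
     card {e \<in> edges W E. \<exists>u v. e = {u, v} \<and> E u v \<and> col (phi u) (phi v) = c}"

definition is_copy :: "'a set \<Rightarrow> ('a \<Rightarrow> 'b) \<Rightarrow> 'b set \<Rightarrow> bool" where
  "is_copy W phi V \<longleftrightarrow> inj_on phi W \<and> phi ` W \<subseteq> V"

end

theory Submission
  imports Defs
begin

lemma half:
  assumes fin: "finite {(p,q). R p q}" and sym: "\<forall>p q. R p q \<longrightarrow> R q p" and irr: "\<forall>p. \<not> R p p"
  shows "card {(p,q). R p q} = 2 * card {{p,q} | p q. R p q}"
proof -
  let ?S = "{(p,q). R p q}"
  let ?h = "\<lambda>(p::'a,q). {p,q}"
  have img: "?h ` ?S = {{p,q}|p q. R p q}" by auto
  have "card ?S = (\<Sum>e\<in>?h ` ?S. card {s\<in>?S. ?h s = e})"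
  proof -
    have "(\<Sum>s\<in>?S. (1::nat)) = (\<Sum>e\<in>?h ` ?S. \<Sum>s\<in>{s\<in>?S. ?h s = e}. 1)"
      by (rule sum.image_gen[OF fin])
    then show ?thesis by simp
  qed
  also have "\<dots> = (\<Sum>e\<in>?h ` ?S. 2)"
  proof (rule sum.cong)
    fix e assume "e \<in> ?h ` ?S"
    then obtain p q where pq: "R p q" "e = {p,q}" by auto
    have ne: "p \<noteq> q" using pq irr by auto
    have "{s\<in>?S. ?h s = e} = {(p,q),(q,p)}"
      using pq sym by (auto simp: doubleton_eq_iff)
    then show "card {s\<in>?S. ?h s = e} = 2" using ne by simp
  qed simp
  also have "\<dots> = 2 * card (?h ` ?S)" by simp
  finally show ?thesis using img by simp
qed

definition nb :: "'a set \<Rightarrow> ('a \<Rightarrow> 'a \<Rightarrow> bool) \<Rightarrow> 'a \<Rightarrow> 'a set" where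
  "nb W E v = {u\<in>W. E v u}"

definition sameP :: "('a \<Rightarrow> 'a \<Rightarrow> bool) \<Rightarrow> 'a set \<Rightarrow> ('a \<times> 'a) set" where
  "sameP E X = {(p,q). E p q \<and> ((p\<in>X) = (q\<in>X))}"

definition crossP :: "('a \<Rightarrow> 'a \<Rightarrow> bool) \<Rightarrow> 'a set \<Rightarrow> ('a \<times> 'a) set" where
  "crossP E X = {(p,q). E p q \<and> ((p\<in>X) \<noteq> (q\<in>X))}"

lemma fin_pairs: "simple_graph W E \<Longrightarrow> finite {(p,q). E p q \<and> P p q}"
  by (rule finite_subset[of _ "W \<times> W"]) (auto simp: simple_graph_def)

lemma fin_sameP: "simple_graph W E \<Longrightarrow> finite (sameP E X)"
  unfolding sameP_def by (rule fin_pairs)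

lemma fin_crossP: "simple_graph W E \<Longrightarrow> finite (crossP E X)"
  unfolding crossP_def by (rule fin_pairs)

lemma fin_nb: "simple_graph W E \<Longrightarrow> finite (nb W E v)"
  unfolding nb_def simple_graph_def by auto

lemma edge_step:
  assumes g: "simple_graph W E" and deg: "\<forall>v\<in>W. card (nb W E v) \<le> 2"
  and exy: "E x y"
  and W'_def: "W' = W - {x,y}" and E'_def: "E' = (\<lambda>p q. E p q \<and> p \<in> W' \<and> q \<in> W')"
  and X'W: "X' \<subseteq> W'" and b1: "card X' \<le> card (W'-X') + 1" and b2: "card (W'-X') \<le> card X' + 1"
  shows "\<exists>X \<subseteq> W. card X \<le> card (W-X)+1 \<and> card (W-X) \<le> card X + 1 \<and>
     card (sameP E X) \<le> card (sameP E' X') + 2 * card (nb W E y - {x})"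
proof -
  have finW: "finite W" and sym: "\<And>u v. E u v \<Longrightarrow> E v u" and irr: "\<And>u. \<not> E u u"
    and inW: "\<And>u v. E u v \<Longrightarrow> u \<in> W \<and> v \<in> W"
    using g unfolding simple_graph_def by auto
  have xW: "x \<in> W" "y \<in> W" "x \<noteq> y" using inW[OF exy] irr exy by auto
  have finW': "finite W'" using finW W'_def by simp
  have finX': "finite X'" using finW' X'W finite_subset by blast
  have xyX': "x \<notin> X'" "y \<notin> X'" using X'W W'_def by auto
  define P where "P = (\<exists>w. E x w \<and> w \<noteq> y \<and> w \<in> X')"
  define X where "X = (if P then insert y X' else insert x X')"
  have XW: "X \<subseteq> W" using X'W W'_def xW unfolding X_def by auto
  have cardX: "card X = card X' + 1" using finX' xyX' unfolding X_def by auto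
  have WX: "W - X = (if P then insert x (W'-X') else insert y (W'-X'))"
    using X'W W'_def xW unfolding X_def by auto
  have cardWX: "card (W - X) = card (W'-X') + 1" using finW' xyX' W'_def unfolding WX by auto
  have xyX: "(x\<in>X) \<noteq> (y\<in>X)" using xyX' xW unfolding X_def by auto
  have noX: "\<not> (E x r \<and> r \<noteq> y \<and> ((x\<in>X) = (r\<in>X)))" for r
  proof
    assume r: "E x r \<and> r \<noteq> y \<and> ((x\<in>X) = (r\<in>X))"
    show False
    proof (cases P)
      case True
      then obtain w where w: "E x w" "w \<noteq> y" "w \<in> X'" unfolding P_def by auto
      have "x \<notin> X" using True xyX' xW unfolding X_def by auto
      then have "r \<notin> X'" using r True unfolding X_def by auto
      then have "w \<noteq> r" using w by auto
      then have "card {y,w,r} = 3" using w r by auto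
      moreover have "{y,w,r} \<subseteq> nb W E x" using w r exy inW unfolding nb_def by auto
      ultimately have "3 \<le> card (nb W E x)" using card_mono[OF fin_nb[OF g]] by metis
      then show False using deg xW by fastforce
    next
      case False
      then have "x \<in> X" unfolding X_def by auto
      then have "r \<in> insert x X'" using r False unfolding X_def by auto
      then show False using False r irr unfolding P_def by auto
    qed
  qed
  have sub: "sameP E X \<subseteq> sameP E' X' \<union> (\<lambda>w. (y,w)) ` (nb W E y - {x}) \<union> (\<lambda>w. (w,y)) ` (nb W E y - {x})"
  proof
    fix pq assume "pq \<in> sameP E X"
    then obtain p q where pq: "pq = (p,q)" "E p q" "(p\<in>X) = (q\<in>X)" unfolding sameP_def by auto
    have pqW: "p \<in> W" "q \<in> W" using inW pq by auto
    show "pq \<in> sameP E' X' \<union> (\<lambda>w. (y,w)) ` (nb W E y - {x}) \<union> (\<lambda>w. (w,y)) ` (nb W E y - {x})"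
    proof (cases "p \<in> W' \<and> q \<in> W'")
      case True
      have "(p\<in>X') = (q\<in>X')" using pq True W'_def unfolding X_def by (auto split: if_splits)
      then show ?thesis using True pq unfolding sameP_def E'_def by auto
    next
      case False
      then have "p \<in> {x,y} \<or> q \<in> {x,y}" using pqW W'_def by auto
      moreover have "p \<noteq> x" using noX[of q] xyX pq by auto
      moreover have "q \<noteq> x" using noX[of p] xyX pq sym by auto
      ultimately have "p = y \<or> q = y" by auto
      then show ?thesis
      proof
        assume "p = y"
        then have "q \<in> nb W E y - {x}" using pq pqW xyX unfolding nb_def by auto
        then show ?thesis using pq \<open>p = y\<close> by auto
      next
        assume "q = y"
        then have "p \<in> nb W E y - {x}" using pq pqW xyX sym unfolding nb_def by auto
        then show ?thesis using pq \<open>q = y\<close> by auto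
      qed
    qed
  qed
  have finN: "finite (nb W E y - {x})" using fin_nb[OF g] by auto
  have g': "simple_graph W' E'" using finW' sym irr unfolding simple_graph_def E'_def by auto
  have "card (sameP E X) \<le> card (sameP E' X' \<union> (\<lambda>w. (y,w)) ` (nb W E y - {x}) \<union> (\<lambda>w. (w,y)) ` (nb W E y - {x}))"
    by (rule card_mono[OF _ sub]) (use fin_sameP[OF g'] finN in auto)
  also have "\<dots> \<le> card (sameP E' X') + card ((\<lambda>w. (y,w)) ` (nb W E y - {x})) + card ((\<lambda>w. (w,y)) ` (nb W E y - {x}))"
    by (meson card_Un_le add_le_mono order_trans le_refl)
  also have "\<dots> \<le> card (sameP E' X') + 2 * card (nb W E y - {x})"
    using card_image_le[OF finN, of "\<lambda>w. (y,w)"] card_image_le[OF finN, of "\<lambda>w. (w,y)"] by linarith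
  finally show ?thesis using XW cardX cardWX b1 b2 by auto
qed

lemma restrict_graph:
  assumes g: "simple_graph W E" and deg: "\<forall>v\<in>W. card (nb W E v) \<le> 2"
    and W'W: "W' \<subseteq> W" and E'_def: "E' = (\<lambda>p q. E p q \<and> p \<in> W' \<and> q \<in> W')"
  shows "simple_graph W' E'" "\<forall>v\<in>W'. card (nb W' E' v) \<le> 2"
    "\<And>v. nb W' E' v \<subseteq> nb W E v"
proof -
  show g': "simple_graph W' E'" using g W'W finite_subset unfolding simple_graph_def E'_def by blast
  show sub: "\<And>v. nb W' E' v \<subseteq> nb W E v" using W'W unfolding nb_def E'_def by auto
  show "\<forall>v\<in>W'. card (nb W' E' v) \<le> 2"
    using deg W'W card_mono[OF fin_nb[OF g] sub] by (meson order_trans subsetD)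
qed

lemma bal:
  "simple_graph W E \<Longrightarrow> \<forall>v\<in>W. card (nb W E v) \<le> 2 \<Longrightarrow>
   \<exists>X\<subseteq>W. card X \<le> card (W-X)+1 \<and> card (W-X) \<le> card X+1 \<and>
     3 * card (sameP E X) + (if \<exists>v\<in>W. card (nb W E v) \<le> 1 then 2 else 0) \<le> 2 * card W"
proof (induction "card W" arbitrary: W E rule: less_induct)
  case less
  note g = less.prems(1) and deg = less.prems(2)
  have finW: "finite W" and sym: "\<And>u v. E u v \<Longrightarrow> E v u" and irr: "\<And>u. \<not> E u u"
    and inW: "\<And>u v. E u v \<Longrightarrow> u \<in> W \<and> v \<in> W"
    using g unfolding simple_graph_def by auto
  show ?case
  proof (cases "W = {}")
    case True
    then have "sameP E {} = {}" using inW unfolding sameP_def by auto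
    then show ?thesis using True by auto
  next
    case nonempty: False
    show ?thesis
    proof (cases "\<exists>u\<in>W. nb W E u = {}")
      case True
      then obtain u where u: "u \<in> W" "nb W E u = {}" by auto
      define W' where "W' = W - {u}"
      define E' where "E' = (\<lambda>p q. E p q \<and> p \<in> W' \<and> q \<in> W')"
      have W'W: "W' \<subseteq> W" unfolding W'_def by auto
      note r = restrict_graph[OF g deg W'W E'_def]
      have cpos: "card W > 0" using u finW card_gt_0_iff by auto
      then have cW': "card W' = card W - 1" "card W' < card W" using u finW unfolding W'_def
        by auto
      obtain X' where X': "X' \<subseteq> W'" "card X' \<le> card (W'-X')+1" "card (W'-X') \<le> card X'+1"
        "3 * card (sameP E' X') \<le> 2 * card W'"
        using less.hyps[OF cW'(2) r(1) r(2)] by auto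
      have finW': "finite W'" using finW W'W finite_subset by blast
      have finX': "finite X'" using finW' X'(1) finite_subset by blast
      have noE: "\<And>q. \<not> E u q" using u inW unfolding nb_def by auto
      have subS: "sameP E X \<subseteq> sameP E' X'" if "X - {u} = X'" for X
      proof
        fix pq assume "pq \<in> sameP E X"
        then obtain p q where pq: "pq = (p,q)" "E p q" "(p\<in>X) = (q\<in>X)" unfolding sameP_def by auto
        have "p \<noteq> u" "q \<noteq> u" using noE sym pq by blast+
        then show "pq \<in> sameP E' X'" using pq inW that unfolding sameP_def E'_def W'_def by auto
      qed
      have uX': "u \<notin> X'" using X'(1) unfolding W'_def by auto
      show ?thesis
      proof (cases "card X' \<le> card (W'-X')")
        case True
        define X where "X = insert u X'"
        have "X \<subseteq> W" using X'(1) W'W u unfolding X_def by auto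
        moreover have "card X = card X' + 1" using finX' uX' unfolding X_def by auto
        moreover have "W - X = W' - X'" unfolding X_def W'_def by auto
        moreover have sX: "card (sameP E X) \<le> card (sameP E' X')"
          by (rule card_mono[OF fin_sameP[OF r(1)] subS]) (use uX' in \<open>auto simp: X_def\<close>)
        moreover have "3 * card (sameP E X) + 2 \<le> 2 * card W" using sX X'(4) cW' cpos by linarith
        moreover have "3 * card (sameP E X) + (if \<exists>v\<in>W. card (nb W E v) \<le> 1 then 2 else 0) \<le> 2 * card W"
          using \<open>3 * card (sameP E X) + 2 \<le> 2 * card W\<close> by auto
        ultimately show ?thesis using True X' cW' cpos
          by (intro exI[of _ X]) (auto simp: card_gt_0_iff)
      next
        case False
        define X where "X = X'"
        have "X \<subseteq> W" using X'(1) W'W unfolding X_def by auto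
        moreover have "W - X = insert u (W' - X')" using u uX' X'(1) unfolding X_def W'_def by auto
        moreover have "card (insert u (W' - X')) = card (W'-X') + 1" using finW' unfolding W'_def by auto
        moreover have sX: "card (sameP E X) \<le> card (sameP E' X')"
          by (rule card_mono[OF fin_sameP[OF r(1)] subS]) (use uX' in \<open>auto simp: X_def\<close>)
        moreover have "3 * card (sameP E X) + 2 \<le> 2 * card W" using sX X'(4) cW' cpos by linarith
        moreover have "3 * card (sameP E X) + (if \<exists>v\<in>W. card (nb W E v) \<le> 1 then 2 else 0) \<le> 2 * card W"
          using \<open>3 * card (sameP E X) + 2 \<le> 2 * card W\<close> by auto
        ultimately show ?thesis using False X' cW' cpos
          by (intro exI[of _ X]) (auto simp: card_gt_0_iff X_def)
      qed
    next
      case noiso: False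
      show ?thesis
      proof (cases "\<exists>v\<in>W. card (nb W E v) \<le> 1")
        case True
        then obtain y where y: "y \<in> W" "card (nb W E y) \<le> 1" by auto
        have "nb W E y \<noteq> {}" using noiso y by auto
        then have "card (nb W E y) = 1" using y fin_nb[OF g] by (simp add: card_gt_0_iff le_antisym Suc_leI)
        then obtain x where x: "nb W E y = {x}" using card_1_singletonE by blast
        have exy: "E x y" using x sym unfolding nb_def by auto
        define W' where "W' = W - {x,y}"
        define E' where "E' = (\<lambda>p q. E p q \<and> p \<in> W' \<and> q \<in> W')"
        have W'W: "W' \<subseteq> W" unfolding W'_def by auto
        note r = restrict_graph[OF g deg W'W E'_def]
        have xyW: "x \<in> W" "y \<in> W" "x \<noteq> y" using inW[OF exy] irr exy by auto
        have cW': "card W' = card W - 2" unfolding W'_def using xyW finW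
          by (subst card_Diff_subset) auto
        have lt: "card W' < card W" using cW' nonempty finW by (simp add: card_gt_0_iff)
        obtain X' where X': "X' \<subseteq> W'" "card X' \<le> card (W'-X')+1" "card (W'-X') \<le> card X'+1"
          "3 * card (sameP E' X') \<le> 2 * card W'"
          using less.hyps[OF lt r(1) r(2)] by auto
        obtain X where X: "X \<subseteq> W" "card X \<le> card (W-X)+1" "card (W-X) \<le> card X + 1"
          "card (sameP E X) \<le> card (sameP E' X') + 2 * card (nb W E y - {x})"
          using edge_step[OF g deg exy W'_def E'_def X'(1-3)] by blast
        have "nb W E y - {x} = {}" using x by auto
        then have e: "card (nb W E y - {x}) = 0" by (metis card.empty)
        have c2: "2 \<le> card W" using card_mono[OF finW, of "{x,y}"] xyW by auto
        have "3 * card (sameP E X) + 2 \<le> 2 * card W" using X(4) X'(4) cW' c2 e by linarith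
        then show ?thesis using X True by auto
      next
        case False
        then have all2: "\<forall>v\<in>W. card (nb W E v) = 2" using deg by fastforce
        obtain y where yW: "y \<in> W" using nonempty by auto
        have "card (nb W E y) = 2" using all2 yW by auto
        then obtain x where x: "x \<in> nb W E y"
          by (metis card.empty ex_in_conv zero_neq_numeral)
        have exy: "E x y" using x sym unfolding nb_def by auto
        define W' where "W' = W - {x,y}"
        define E' where "E' = (\<lambda>p q. E p q \<and> p \<in> W' \<and> q \<in> W')"
        have W'W: "W' \<subseteq> W" unfolding W'_def by auto
        note r = restrict_graph[OF g deg W'W E'_def]
        have xyW: "x \<in> W" "y \<in> W" "x \<noteq> y" using inW[OF exy] irr exy by auto
        have cW': "card W' = card W - 2" unfolding W'_def using xyW finW
          by (subst card_Diff_subset) auto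
        have lt: "card W' < card W" using cW' nonempty finW by (simp add: card_gt_0_iff)
        have cny: "card (nb W E y - {x}) = 1" using x all2 yW fin_nb[OF g] by (simp add: card_Diff_singleton)
        then obtain w where w: "nb W E y - {x} = {w}" using card_1_singletonE by blast
        have wW': "w \<in> W'" using w irr unfolding nb_def W'_def by auto
        have "E w y" using w sym unfolding nb_def by auto
        have "nb W' E' w \<subseteq> nb W E w - {y}" using r(3)[of w] unfolding nb_def W'_def by auto
        moreover have "card (nb W E w - {y}) = 1"
          using all2 \<open>E w y\<close> inW fin_nb[OF g] by (simp add: card_Diff_singleton nb_def)
        ultimately have "card (nb W' E' w) \<le> 1"
          by (metis card_mono finite_Diff fin_nb[OF g])
        then have bonus: "\<exists>v\<in>W'. card (nb W' E' v) \<le> 1" using wW' by auto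
        obtain X' where X': "X' \<subseteq> W'" "card X' \<le> card (W'-X')+1" "card (W'-X') \<le> card X'+1"
          "3 * card (sameP E' X') + 2 \<le> 2 * card W'"
          using less.hyps[OF lt r(1) r(2)] bonus by auto
        obtain X where X: "X \<subseteq> W" "card X \<le> card (W-X)+1" "card (W-X) \<le> card X + 1"
          "card (sameP E X) \<le> card (sameP E' X') + 2 * card (nb W E y - {x})"
          using edge_step[OF g deg exy W'_def E'_def X'(1-3)] by blast
        have c2: "2 \<le> card W" using card_mono[OF finW, of "{x,y}"] xyW by auto
        have "3 * card (sameP E X) \<le> 2 * card W" using X(4) X'(4) cW' c2 cny by linarith
        then show ?thesis using X False by auto
      qed
    qed
  qed
qed

lemma greedy:
  assumes g: "simple_graph W E" and deg: "\<forall>v\<in>W. card (nb W E v) \<le> 2"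
  shows "m \<le> card W \<Longrightarrow> \<exists>X\<subseteq>W. card X = m \<and> card (crossP E X) \<le> 4"
proof (induction m)
  have finW: "finite W" and sym: "\<And>u v. E u v \<Longrightarrow> E v u" and irr: "\<And>u. \<not> E u u"
    and inW: "\<And>u v. E u v \<Longrightarrow> u \<in> W \<and> v \<in> W"
    using g unfolding simple_graph_def by auto
  {
    case 0
    have "crossP E {} = {}" unfolding crossP_def by auto
    then show ?case by (intro exI[of _ "{}"]) auto
  next
    case (Suc m)
    then obtain X where X: "X \<subseteq> W" "card X = m" "card (crossP E X) \<le> 4" by auto
    have finX: "finite X" using X(1) finW finite_subset by blast
    have finC: "finite (crossP E Y)" for Y using fin_crossP[OF g] .
    have finN: "finite (nb W E w)" for w using fin_nb[OF g] .
    show ?case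
    proof (cases "crossP E X = {}")
      case True
      have "\<not> W \<subseteq> X" using Suc.prems X card_mono[OF finX] by fastforce
      then obtain w where w: "w \<in> W" "w \<notin> X" by auto
      define X2 where "X2 = insert w X"
      have sub: "crossP E X2 \<subseteq> (\<lambda>q. (w,q)) ` nb W E w \<union> (\<lambda>q. (q,w)) ` nb W E w"
      proof
        fix pq assume "pq \<in> crossP E X2"
        then obtain p q where pq: "pq = (p,q)" "E p q" "(p\<in>X2) \<noteq> (q\<in>X2)" unfolding crossP_def by auto
        have "p = w \<or> q = w" using True pq unfolding crossP_def X2_def by auto
        then show "pq \<in> (\<lambda>q. (w,q)) ` nb W E w \<union> (\<lambda>q. (q,w)) ` nb W E w"
          using pq inW sym unfolding nb_def by auto
      qed
      have "card (crossP E X2) \<le> card ((\<lambda>q. (w,q)) ` nb W E w \<union> (\<lambda>q. (q,w)) ` nb W E w)"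
        by (rule card_mono[OF _ sub]) (use finN in auto)
      also have "\<dots> \<le> card (nb W E w) + card (nb W E w)"
        using card_Un_le card_image_le[OF finN, of "\<lambda>q. (w,q)" w] card_image_le[OF finN, of "\<lambda>q. (q,w)" w]
        by (meson add_le_mono order_trans)
      also have "\<dots> \<le> 4" using deg w by fastforce
      finally show ?thesis using X w finX unfolding X2_def by (intro exI[of _ "insert w X"]) auto
    next
      case False
      then obtain p q where pq: "E p q" "(p\<in>X) \<noteq> (q\<in>X)" unfolding crossP_def by auto
      obtain x w where xw: "x \<in> X" "w \<notin> X" "E w x"
        using pq sym by (cases "p \<in> X") auto
      have wW: "w \<in> W" using inW xw by auto
      have wx: "w \<noteq> x" using xw by auto
      define X2 where "X2 = insert w X"
      let ?D = "crossP E X - {(w,x),(x,w)}"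
      let ?N = "nb W E w - {x}"
      have sub: "crossP E X2 \<subseteq> ?D \<union> (\<lambda>q. (w,q)) ` ?N \<union> (\<lambda>q. (q,w)) ` ?N"
      proof
        fix pq assume "pq \<in> crossP E X2"
        then obtain p q where pq: "pq = (p,q)" "E p q" "(p\<in>X2) \<noteq> (q\<in>X2)" unfolding crossP_def by auto
        show "pq \<in> ?D \<union> (\<lambda>q. (w,q)) ` ?N \<union> (\<lambda>q. (q,w)) ` ?N"
        proof (cases "p = w \<or> q = w")
          case True
          then show ?thesis using pq inW sym xw unfolding nb_def X2_def by auto
        next
          case False
          then show ?thesis using pq unfolding crossP_def X2_def by auto
        qed
      qed
      have inC: "{(w,x),(x,w)} \<subseteq> crossP E X" using xw sym unfolding crossP_def by auto
      have cD: "card ?D = card (crossP E X) - 2"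
        using card_Diff_subset[OF _ inC] wx by auto
      have c2: "2 \<le> card (crossP E X)" using card_mono[OF finC inC] wx by auto
      have xN: "x \<in> nb W E w" using xw inW unfolding nb_def by auto
      have cN: "card ?N \<le> 1" using card_Diff_singleton[OF xN] deg wW by fastforce
      have finN': "finite ?N" using finN by auto
      have "card (crossP E X2) \<le> card (?D \<union> (\<lambda>q. (w,q)) ` ?N \<union> (\<lambda>q. (q,w)) ` ?N)"
        by (rule card_mono[OF _ sub]) (use finN finC in auto)
      also have "\<dots> \<le> card ?D + card ((\<lambda>q. (w,q)) ` ?N) + card ((\<lambda>q. (q,w)) ` ?N)"
        by (meson card_Un_le add_le_mono order_trans le_refl)
      also have "\<dots> \<le> card ?D + card ?N + card ?N"
        using card_image_le[OF finN', of "\<lambda>q. (w,q)"] card_image_le[OF finN', of "\<lambda>q. (q,w)"] by linarith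
      also have "\<dots> \<le> 4" using cD c2 cN X(3) by linarith
      finally show ?thesis using X xw wW finX unfolding X2_def by (intro exI[of _ "insert w X"]) auto
    qed
  }
qed

lemma mkphi:
  assumes "finite W" "X \<subseteq> W" "finite A" "finite B" "card X = card A" "card (W - X) = card B" "A \<inter> B = {}"
  shows "\<exists>phi. inj_on phi W \<and> phi ` X = A \<and> phi ` (W - X) = B"
proof -
  have fX: "finite X" using assms finite_subset by blast
  obtain f where f: "bij_betw f X A" using finite_same_card_bij[OF fX assms(3) assms(5)] by blast
  obtain h where h: "bij_betw h (W - X) B" using finite_same_card_bij[of "W - X" B] assms by auto
  define phi where "phi = (\<lambda>u. if u \<in> X then f u else h u)"
  have 1: "bij_betw phi X A" using f unfolding phi_def by (rule bij_betw_cong[THEN iffD1, rotated]) auto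
  have 2: "bij_betw phi (W - X) B" using h unfolding phi_def by (rule bij_betw_cong[THEN iffD1, rotated]) auto
  have "bij_betw phi (X \<union> (W - X)) (A \<union> B)" by (rule bij_betw_combine[OF 1 2 assms(7)])
  moreover have "X \<union> (W - X) = W" using assms by auto
  ultimately show ?thesis using 1 2 by (auto simp: bij_betw_def)
qed

lemma cc:
  assumes g: "simple_graph W E"
    and key: "\<forall>p q. E p q \<longrightarrow> col (phi p) (phi q) = ((p\<in>X) = (q\<in>X))"
  shows "2 * colour_count W E phi col c = card {(p,q). E p q \<and> ((p\<in>X) = (q\<in>X)) = c}"
proof -
  have sym: "\<And>u v. E u v \<Longrightarrow> E v u" and irr: "\<And>u. \<not> E u u"
    and inW: "\<And>u v. E u v \<Longrightarrow> u \<in> W \<and> v \<in> W"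
    using g unfolding simple_graph_def by auto
  let ?R = "\<lambda>p q. E p q \<and> ((p\<in>X) = (q\<in>X)) = c"
  have "{e \<in> edges W E. \<exists>u v. e = {u, v} \<and> E u v \<and> col (phi u) (phi v) = c}
      = {{p,q} | p q. ?R p q}"
    using key inW unfolding edges_def by blast
  then have "colour_count W E phi col c = card {{p,q} | p q. ?R p q}"
    unfolding colour_count_def by simp
  moreover have "card {(p,q). ?R p q} = 2 * card {{p,q} | p q. ?R p q}"
    by (rule half) (use fin_pairs[OF g] sym irr in auto)
  ultimately show ?thesis by simp
qed

theorem lemma3p9:
  fixes k :: nat
    and W :: "'a set" and E :: "'a \<Rightarrow> 'a \<Rightarrow> bool"
    and V :: "'b set" and col :: "'b \<Rightarrow> 'b \<Rightarrow> bool"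
    and A B :: "'b set"
  assumes "k \<ge> 1"
    and "two_factor W E" and "card W = 4 * k"
    and "finite V" and "card V = 4 * k"
    and "A \<union> B = V" and "A \<inter> B = {}" and "card A = 2 * k" and "card B = 2 * k"
    and "\<forall>u v. u \<in> V \<and> v \<in> V \<and> u \<noteq> v \<longrightarrow>
           (col u v \<longleftrightarrow> (u \<in> A \<and> v \<in> A) \<or> (u \<in> B \<and> v \<in> B))"
  shows "(\<exists>phi. is_copy W phi V \<and> colour_count W E phi col True \<ge> 4 * k - 2)
       \<and> (\<exists>phi. is_copy W phi V \<and> 3 * colour_count W E phi col False \<ge> 8 * k)"
proof -
  have g: "simple_graph W E" using assms(2) unfolding two_factor_def by auto
  have d2: "\<forall>v\<in>W. card (nb W E v) = 2" using assms(2) unfolding two_factor_def nb_def by auto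
  then have deg: "\<forall>v\<in>W. card (nb W E v) \<le> 2" by auto
  have finW: "finite W" and inW: "\<And>u v. E u v \<Longrightarrow> u \<in> W \<and> v \<in> W"
    using g unfolding simple_graph_def by auto
  have finA: "finite A" and finB: "finite B" using assms(4,6) finite_subset by blast+
  have "{(p,q). E p q} = Sigma W (nb W E)" using inW unfolding nb_def by auto
  then have allP: "card {(p,q). E p q} = 8 * k"
    using finW fin_nb[OF g] d2 assms(3) by simp
  have split: "card (sameP E X) + card (crossP E X) = 8 * k" for X
  proof -
    have "sameP E X \<union> crossP E X = {(p,q). E p q}" unfolding sameP_def crossP_def by auto
    moreover have "sameP E X \<inter> crossP E X = {}" unfolding sameP_def crossP_def by auto
    ultimately show ?thesis using card_Un_disjoint[OF fin_sameP[OF g] fin_crossP[OF g], of X X] allP by simp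
  qed
  have copy: "\<exists>phi. is_copy W phi V \<and> 2 * colour_count W E phi col True = card (sameP E X)
      \<and> 2 * colour_count W E phi col False = card (crossP E X)"
    if X: "X \<subseteq> W" "card X = 2 * k" for X
  proof -
    have "card (W - X) = 2 * k" using X assms(3) finW by (simp add: card_Diff_subset finite_subset)
    then obtain phi where phi: "inj_on phi W" "phi ` X = A" "phi ` (W - X) = B"
      using mkphi[OF finW X(1) finA finB] X assms(7,8,9) by auto
    have WX: "W = X \<union> (W - X)" using X by auto
    have img: "phi ` W = V" using phi assms(6) WX by (metis image_Un)
    have inA: "p \<in> W \<Longrightarrow> (phi p \<in> A) = (p \<in> X)" for p using phi assms(7) by blast
    have inB: "p \<in> W \<Longrightarrow> (phi p \<in> B) = (p \<notin> X)" for p using phi assms(7) by blast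
    have key: "\<forall>p q. E p q \<longrightarrow> col (phi p) (phi q) = ((p\<in>X) = (q\<in>X))"
    proof (intro allI impI)
      fix p q assume e: "E p q"
      have pq: "p \<in> W" "q \<in> W" "p \<noteq> q" using inW[OF e] e g unfolding simple_graph_def by auto
      have "phi p \<noteq> phi q" using phi(1) pq inj_on_def by metis
      moreover have "phi p \<in> V" "phi q \<in> V" using img pq by auto
      ultimately have "col (phi p) (phi q) = ((phi p \<in> A \<and> phi q \<in> A) \<or> (phi p \<in> B \<and> phi q \<in> B))"
        using assms(10) by blast
      then show "col (phi p) (phi q) = ((p\<in>X) = (q\<in>X))" using inA inB pq by auto
    qed
    have "is_copy W phi V" unfolding is_copy_def using phi(1) img by auto
    moreover have "2 * colour_count W E phi col True = card (sameP E X)"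
      using cc[of W E col phi X True, OF g key] unfolding sameP_def by simp
    moreover have "2 * colour_count W E phi col False = card (crossP E X)"
      using cc[of W E col phi X False, OF g key] unfolding crossP_def by simp
    ultimately show ?thesis by blast
  qed
  have p1: "\<exists>phi. is_copy W phi V \<and> colour_count W E phi col True \<ge> 4 * k - 2"
  proof -
    obtain X where X: "X \<subseteq> W" "card X = 2 * k" "card (crossP E X) \<le> 4"
      using greedy[OF g deg, of "2 * k"] assms(3) by auto
    obtain phi where phi: "is_copy W phi V" "2 * colour_count W E phi col True = card (sameP E X)"
      using copy[OF X(1,2)] by auto
    have "2 * colour_count W E phi col True \<ge> 8 * k - 4" using phi(2) split[of X] X(3) by linarith
    then have "colour_count W E phi col True \<ge> 4 * k - 2" by linarith
    then show ?thesis using phi(1) by blast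
  qed
  have p2: "\<exists>phi. is_copy W phi V \<and> 3 * colour_count W E phi col False \<ge> 8 * k"
  proof -
    obtain X where X: "X \<subseteq> W" "card X \<le> card (W-X)+1" "card (W-X) \<le> card X+1"
      "3 * card (sameP E X) + (if \<exists>v\<in>W. card (nb W E v) \<le> 1 then 2 else 0) \<le> 2 * card W"
      using bal[OF g deg] by blast
    have cWX: "card (W - X) = card W - card X" using X(1) finW by (simp add: card_Diff_subset finite_subset)
    have cX: "card X \<le> card W" using X(1) finW card_mono by blast
    have "card X = 2 * k" using X(2,3) cWX cX assms(3) by linarith
    then obtain phi where phi: "is_copy W phi V" "2 * colour_count W E phi col False = card (crossP E X)"
      using copy[OF X(1)] by auto
    have "3 * card (sameP E X) \<le> 8 * k" using X(4) assms(3) by linarith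
    then have "3 * (2 * colour_count W E phi col False) \<ge> 16 * k" using phi(2) split[of X] by linarith
    then have "3 * colour_count W E phi col False \<ge> 8 * k" by linarith
    then show ?thesis using phi(1) by blast
  qed
  show ?thesis using p1 p2 by blast
qed

end
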